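(* Let $\alpha>-1$, $\alpha\ne0$, and let $\eta_1=\eta_1(\alpha)\in(0,1)$ be the root of the equation $\eta^\alpha=\dfrac{1}{1+\alpha(\eta+1)}$. Define for $0\le\eta\le1$ $$\psi_0(\alpha,\eta)=\dfrac{(1+\eta^{\alpha+1})^{1/\alpha}}{(1+\eta)^{(\alpha+1)/\alpha}}+\dfrac{(\alpha+1)^{(\alpha+1)/\alpha}}{\alpha}\left[\dfrac1{1+\eta^{\alpha+1}}-\dfrac1{1+\eta}\right],\qquad \psi_1(\alpha,\eta)=2\dfrac{(1+\eta^{\alpha+1})^{1/\alpha}}{(1+\eta)^{(\alpha+1)/\alpha}},$$ and let $\psi(\alpha,\eta)=\psi_0(\alpha,\eta)$ for $0\le\eta\le\eta_1$ and $\psi(\alpha,\eta)=\psi_1(\alpha,\eta)$ for $\eta_1\le\eta\le1$. Then $$\max_{0\le\eta\le1}\psi(\alpha,\eta)=\max_{0\le\eta\le\eta_1}\psi_0(\alpha,\eta).$$ *)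

theory Defs
  imports "HOL-Analysis.Analysis"
begin

definition psi0 :: "real \<Rightarrow> real \<Rightarrow> real" where
  "psi0 \<alpha> \<eta> =
     (1 + \<eta> powr (\<alpha> + 1)) powr (1 / \<alpha>) / (1 + \<eta>) powr ((\<alpha> + 1) / \<alpha>)
     + ((\<alpha> + 1) powr ((\<alpha> + 1) / \<alpha>) / \<alpha>)
       * (1 / (1 + \<eta> powr (\<alpha> + 1)) - 1 / (1 + \<eta>))"

definition psi1 :: "real \<Rightarrow> real \<Rightarrow> real" where
  "psi1 \<alpha> \<eta> =
     2 * ((1 + \<eta> powr (\<alpha> + 1)) powr (1 / \<alpha>) / (1 + \<eta>) powr ((\<alpha> + 1) / \<alpha>))"

definition psi :: "real \<Rightarrow> real \<Rightarrow> real \<Rightarrow> real" where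
  "psi \<alpha> \<eta>1 \<eta> = (if \<eta> \<le> \<eta>1 then psi0 \<alpha> \<eta> else psi1 \<alpha> \<eta>)"

end

theory Submission
  imports Defs
begin

lemma powr_exp_ln: "(a::real) > 0 \<Longrightarrow> a powr b = exp (b * ln a)"
  by (simp add: powr_def)

lemma alg_aux: "\<lbrakk>(a::real) \<noteq> 0; 1 + x*p \<noteq> 0; 1 + x \<noteq> 0\<rbrakk> \<Longrightarrow> (1/a) * (((a+1) * p) / (1 + x*p)) - ((a+1)/a) * (1/(1+x))
      = ((a+1)/a) * ((p - 1) / ((1 + x*p) * (1+x)))"
  by (simp add: divide_simps) (simp add: algebra_simps)

lemma g_deriv:
  fixes \<alpha> x :: real
  assumes "x > 0" "\<alpha> > -1" "\<alpha> \<noteq> 0"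
  shows "((\<lambda>x. (1/\<alpha>) * ln (1 + x powr (\<alpha>+1)) - ((\<alpha>+1)/\<alpha>) * ln (1+x)) has_real_derivative
   (1/\<alpha>) * (((\<alpha>+1) * x powr \<alpha>) / (1 + x powr (\<alpha>+1))) - ((\<alpha>+1)/\<alpha>) * (1/(1+x))) (at x)"
proof -
  have d1: "((\<lambda>x. x powr (\<alpha>+1)) has_real_derivative (\<alpha>+1) * x powr \<alpha>) (at x)"
    using has_real_derivative_powr[OF assms(1), of "\<alpha>+1"] by simp
  have p: "x powr (\<alpha>+1) \<ge> 0" by simp
  show ?thesis
    using assms p
    by (auto intro!: derivative_eq_intros d1 simp: add_pos_nonneg mult.commute)
qed

lemma g_deriv_nonpos:
  fixes \<alpha> x :: real
  assumes "0 < x" "x \<le> 1" "\<alpha> > -1" "\<alpha> \<noteq> 0"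
  shows "(1/\<alpha>) * (((\<alpha>+1) * x powr \<alpha>) / (1 + x powr (\<alpha>+1))) - ((\<alpha>+1)/\<alpha>) * (1/(1+x)) \<le> 0"
proof -
  define p where "p = x powr \<alpha>"
  have pp: "p > 0" using assms p_def by simp
  have e: "x powr (\<alpha>+1) = x * p" using assms by (simp add: p_def powr_add)
  have eq: "(1/\<alpha>) * (((\<alpha>+1) * x powr \<alpha>) / (1 + x powr (\<alpha>+1))) - ((\<alpha>+1)/\<alpha>) * (1/(1+x))
      = ((\<alpha>+1)/\<alpha>) * ((p - 1) / ((1 + x*p) * (1+x)))"
  proof -
    have nz: "1 + x*p \<noteq> 0" "1 + x \<noteq> 0" using assms pp by (smt (verit) mult_pos_pos)+
    show ?thesis unfolding e p_def[symmetric] using assms nz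
      by (intro alg_aux)
  qed
  have den: "(1 + x*p) * (1+x) > 0" using assms pp by (simp add: add_pos_pos)
  have "((\<alpha>+1)/\<alpha>) * (p - 1) \<le> 0"
  proof (cases "\<alpha> > 0")
    case True
    have "p \<le> 1" unfolding p_def using powr_mono2[of \<alpha> x 1] assms True by simp
    then have "(\<alpha>+1)*(p-1) \<le> 0" using assms by (intro mult_nonneg_nonpos) auto
    then show ?thesis using True by (simp add: divide_nonpos_pos)
  next
    case False
    then have a: "\<alpha> < 0" using assms by simp
    have q1: "x powr (-\<alpha>) \<le> 1" using powr_mono2[of "-\<alpha>" x 1] assms a by simp
    have q0: "x powr (-\<alpha>) > 0" using assms by simp
    have "p = inverse (x powr (-\<alpha>))" unfolding p_def using powr_minus[of x "-\<alpha>"] by simp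
    then have "p \<ge> 1" using q0 q1 by (simp add: one_le_inverse)
    then have "(\<alpha>+1)*(p-1) \<ge> 0" using assms by (intro mult_nonneg_nonneg) auto
    then show ?thesis using a by (simp add: divide_nonneg_neg)
  qed
  then show ?thesis unfolding eq using den
    by (metis divide_nonpos_pos times_divide_eq_right)
qed

lemma f_mono:
  fixes \<alpha> a b :: real
  assumes "\<alpha> > -1" "\<alpha> \<noteq> 0" "0 < a" "a \<le> b" "b \<le> 1"
  shows "psi1 \<alpha> b \<le> psi1 \<alpha> a"
proof -
  define g where "g = (\<lambda>x::real. (1/\<alpha>) * ln (1 + x powr (\<alpha>+1)) - ((\<alpha>+1)/\<alpha>) * ln (1+x))"
  have fx: "(1 + x powr (\<alpha> + 1)) powr (1 / \<alpha>) / (1 + x) powr ((\<alpha> + 1) / \<alpha>) = exp (g x)"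
    if "x > 0" for x
  proof -
    have "0 < 1 + x powr (\<alpha>+1)" by (simp add: add_pos_nonneg)
    moreover have "0 < 1 + x" using that by simp
    ultimately show ?thesis
      by (simp add: powr_exp_ln g_def exp_diff mult.commute)
  qed
  have "g b \<le> g a"
  proof (rule DERIV_nonpos_imp_nonincreasing[OF assms(4)])
    fix x assume x: "a \<le> x" "x \<le> b"
    show "\<exists>y. DERIV g x :> y \<and> y \<le> 0"
      using g_deriv[of x \<alpha>] g_deriv_nonpos[of x \<alpha>] x assms unfolding g_def by auto
  qed
  then have "exp (g b) \<le> exp (g a)" by simp
  then show ?thesis unfolding psi1_def using fx[of a] fx[of b] assms by simp
qed

lemma key_eq:
  fixes \<alpha> t :: real
  assumes "\<alpha> > -1" "\<alpha> \<noteq> 0" "0 < t"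
    and h: "t powr \<alpha> = 1 / (1 + \<alpha> * (t + 1))"
  shows "psi1 \<alpha> t = psi0 \<alpha> t"
proof -
  define D where "D = 1 + \<alpha> * (t + 1)"
  have "t powr \<alpha> > 0" using assms(3) by simp
  then have "0 < 1 / (1 + \<alpha> * (t + 1))" by (simp only: h)
  then have "0 < 1 / D" by (simp only: D_def)
  then have D: "D > 0" by (simp add: zero_less_divide_1_iff)
  have tp: "t powr (\<alpha>+1) = t / D" using assms h D_def by (simp add: powr_add)
  have s: "1 + t powr (\<alpha>+1) = (1+\<alpha>)*(1+t)/D" using D tp D_def by (simp add: field_simps)
  define A where "A = (1+\<alpha>) powr (1/\<alpha>)"
  define P where "P = (1+t) powr (1/\<alpha>)"
  define Q where "Q = D powr (1/\<alpha>)"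
  have A: "A > 0" and P: "P > 0" and Q: "Q > 0" using assms D A_def P_def Q_def by auto
  have "t = (t powr \<alpha>) powr (1/\<alpha>)" using assms(2,3) by (simp add: powr_powr)
  also have "\<dots> = 1 / Q" unfolding h D_def[symmetric] Q_def using D by (simp add: powr_divide)
  finally have tQ: "t * Q = 1" using Q by simp
  have e1: "(1 + t powr (\<alpha>+1)) powr (1/\<alpha>) = A * P / Q"
    unfolding s A_def P_def Q_def using assms D by (simp add: powr_divide powr_mult)
  have ex: "(\<alpha>+1)/\<alpha> = 1 + 1/\<alpha>" using assms by (simp add: field_simps)
  have e2: "(1 + t) powr ((\<alpha>+1)/\<alpha>) = (1+t) * P"
    unfolding ex P_def using assms by (simp add: powr_add)
  have e3: "(\<alpha>+1) powr ((\<alpha>+1)/\<alpha>) = (1+\<alpha>) * A"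
    unfolding ex A_def using assms by (simp add: powr_add add.commute)
  have nz: "1 + \<alpha> \<noteq> 0" "1 + t \<noteq> 0" "D \<noteq> 0" using assms D by auto
  have c: "1/(1 + t powr (\<alpha>+1)) - 1/(1+t) = \<alpha>*t/((1+\<alpha>)*(1+t))"
  proof -
    define M where "M = (1+\<alpha>)*(1+t)"
    have M: "M \<noteq> 0" using nz M_def by simp
    have i1: "1/(1+t) = (1+\<alpha>)/M" using nz M_def by simp
    have i2: "1/(M/D) = D/M" by simp
    have i3: "D - (1+\<alpha>) = \<alpha>*t" using D_def by (simp add: algebra_simps)
    have "1/(1 + t powr (\<alpha>+1)) - 1/(1+t) = D/M - (1+\<alpha>)/M"
      unfolding s M_def[symmetric] i1 i2 by simp
    also have "\<dots> = (D - (1+\<alpha>))/M" by (simp add: diff_divide_distrib)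
    finally show ?thesis unfolding i3 M_def .
  qed
  have tq: "1/Q = t" using tQ Q by (simp add: field_simps)
  have f: "A * P / Q / ((1 + t) * P) = A * t / (1+t)"
  proof -
    have "A * P / Q / ((1 + t) * P) = A * (1/Q) / (1+t)" using P by simp
    then show ?thesis unfolding tq .
  qed
  have g: "(1 + \<alpha>) * A / \<alpha> * (\<alpha> * t / ((1 + \<alpha>) * (1 + t))) = A * t / (1+t)"
    using nz assms(2) by (simp add: divide_simps)
  show ?thesis
    unfolding psi1_def psi0_def e1 e2 e3 c f g by simp
qed

lemma Sup_real_eqI:
  fixes X Y :: "real set"
  assumes "\<And>z. (\<forall>x\<in>X. x \<le> z) \<longleftrightarrow> (\<forall>y\<in>Y. y \<le> z)"
  shows "Sup X = Sup Y"
  unfolding Sup_real_def using assms by simp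

theorem corollary2p4:
  fixes \<alpha> \<eta>1 :: real
  assumes "\<alpha> > -1" and "\<alpha> \<noteq> 0"
    and "0 < \<eta>1" and "\<eta>1 < 1"
    and "\<eta>1 powr \<alpha> = 1 / (1 + \<alpha> * (\<eta>1 + 1))"
  shows "(SUP \<eta>\<in>{0..1}. psi \<alpha> \<eta>1 \<eta>) = (SUP \<eta>\<in>{0..\<eta>1}. psi0 \<alpha> \<eta>)"
proof (rule Sup_real_eqI)
  fix z
  have k: "psi1 \<alpha> \<eta>1 = psi0 \<alpha> \<eta>1" using key_eq assms by blast
  show "(\<forall>x\<in>psi \<alpha> \<eta>1 ` {0..1}. x \<le> z) \<longleftrightarrow> (\<forall>y\<in>psi0 \<alpha> ` {0..\<eta>1}. y \<le> z)"
  proof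
    assume H: "\<forall>x\<in>psi \<alpha> \<eta>1 ` {0..1}. x \<le> z"
    show "\<forall>y\<in>psi0 \<alpha> ` {0..\<eta>1}. y \<le> z"
    proof
      fix y assume "y \<in> psi0 \<alpha> ` {0..\<eta>1}"
      then obtain e where e: "e \<in> {0..\<eta>1}" "y = psi0 \<alpha> e" by auto
      then have "psi \<alpha> \<eta>1 e = y" by (simp add: psi_def)
      moreover have "e \<in> {0..1}" using e assms by auto
      ultimately show "y \<le> z" using H by blast
    qed
  next
    assume H: "\<forall>y\<in>psi0 \<alpha> ` {0..\<eta>1}. y \<le> z"
    show "\<forall>x\<in>psi \<alpha> \<eta>1 ` {0..1}. x \<le> z"
    proof
      fix x assume "x \<in> psi \<alpha> \<eta>1 ` {0..1}"
      then obtain e where e: "e \<in> {0..1}" "x = psi \<alpha> \<eta>1 e" by auto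
      show "x \<le> z"
      proof (cases "e \<le> \<eta>1")
        case True
        then show ?thesis using H e by (auto simp: psi_def)
      next
        case False
        then have "x = psi1 \<alpha> e" using e by (simp add: psi_def)
        also have "\<dots> \<le> psi1 \<alpha> \<eta>1" using f_mono[of \<alpha> \<eta>1 e] False e assms by auto
        also have "\<dots> \<le> z" using k H assms by auto
        finally show ?thesis .
      qed
    qed
  qed
qed

end
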